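(* Let $X=(X_1,X_2,\ldots)$ be a stationary, $\psi$-mixing process with values in a finite set $\mathbb X$. Then there exists a sequence $(\lambda_\tau)_{\tau\ge0}$ with $\lambda_\tau\to0$ as $\tau\to\infty$ such that for all $t\in\mathbb N$, all $\tau\in\{0,1,2,\ldots\}$, all $T\in\{0,1,2,\ldots\}$, all $\mathbb A\subseteq\mathbb X^t$ with $\Pr(X_1^t\in\mathbb A)>0$ and all $\mathbb B\subseteq\mathbb X^T$, $$\Pr(X_{t+\tau+1}^{t+\tau+T}\in\mathbb B\mid X_1^t\in\mathbb A)=(1-\lambda_\tau)P_T(\mathbb B)+\lambda_\tau P'_{t,\tau,T,\mathbb A}(\mathbb B)$$ for some probability distribution $P'_{t,\tau,T,\mathbb A}$ on $\mathbb X^T$ (which may depend on $t,\tau,T,\mathbb A$ but not on $\mathbb B$).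
   Context: $X_a^b=(X_a,\ldots,X_b)$. $P_T(\mathbb B)=\Pr(X_{s+1}^{s+T}\in\mathbb B)$ for $\mathbb B\subseteq\mathbb X^T$, which is independent of $s$ by stationarity. $\psi$-mixing: for $\tau\in\{0,1,2,\ldots\}$ let $\psi(\tau)=\sup_{t\in\mathbb N}\sup_{\mathbb A,\mathbb B}\left|\frac{\Pr(X_1^t\in\mathbb A,\,X_{t+\tau+1}^\infty\in\mathbb B)}{\Pr(X_1^t\in\mathbb A)\Pr(X_{t+\tau+1}^\infty\in\mathbb B)}-1\right|$, the inner supremum over $\mathbb A\subseteq\mathbb X^t$ and Borel (product $\sigma$-field) sets $\mathbb B$ of sequences indexed by times $t+\tau+1,t+\tau+2,\ldots$, with both probabilities in the denominator positive. $X$ is $\psi$-mixing if $\psi(\tau)\to0$ as $\tau\to\infty$. *)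

theory Defs
  imports "HOL-Probability.Probability"
begin

text \<open>The process is X :: nat => 'a => 'x on a probability space M, with X 1, X 2, ...
  the relevant coordinates (X 0 is ignored).
  block X s T w is the list (X (s+1) w, ..., X (s+T) w), i.e. X_{s+1}^{s+T}.\<close>

definition block :: "(nat \<Rightarrow> 'a \<Rightarrow> 'x) \<Rightarrow> nat \<Rightarrow> nat \<Rightarrow> 'a \<Rightarrow> 'x list" where
  "block X s T w = map (\<lambda>i. X (s + i + 1) w) [0..<T]"

definition stationary_proc :: "'a measure \<Rightarrow> (nat \<Rightarrow> 'a \<Rightarrow> 'x) \<Rightarrow> bool" where
  "stationary_proc M X \<longleftrightarrow>
     (\<forall>s T (B :: 'x list set). measure M {w \<in> space M. block X s T w \<in> B}
                             = measure M {w \<in> space M. block X 0 T w \<in> B})"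

definition PT :: "'a measure \<Rightarrow> (nat \<Rightarrow> 'a \<Rightarrow> 'x) \<Rightarrow> nat \<Rightarrow> 'x list set \<Rightarrow> real" where
  "PT M X T B = measure M {w \<in> space M. block X 0 T w \<in> B}"

text \<open>Past event {X_1^t in A} and future event {X_{t+tau+1}^\<infinity> in B}, B a product-measurable
  set of sequences (indexed from 0, i.e. n-th entry is X_{t+tau+1+n}).\<close>
definition past_event :: "'a measure \<Rightarrow> (nat \<Rightarrow> 'a \<Rightarrow> 'x) \<Rightarrow> nat \<Rightarrow> 'x list set \<Rightarrow> 'a set" where
  "past_event M X t A = {w \<in> space M. block X 0 t w \<in> A}"

definition future_event :: "'a measure \<Rightarrow> (nat \<Rightarrow> 'a \<Rightarrow> 'x) \<Rightarrow> nat \<Rightarrow> (nat \<Rightarrow> 'x) set \<Rightarrow> 'a set" where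
  "future_event M X u B = {w \<in> space M. (\<lambda>n. X (u + 1 + n) w) \<in> B}"

definition psi_coeff :: "'a measure \<Rightarrow> (nat \<Rightarrow> 'a \<Rightarrow> 'x) \<Rightarrow> nat \<Rightarrow> ereal" where
  "psi_coeff M X \<tau> =
     (SUP (t, A, B) \<in> {(t, A, B). t \<ge> 1 \<and> A \<subseteq> {xs. length xs = t}
          \<and> B \<in> sets (PiM UNIV (\<lambda>_. count_space (UNIV :: 'x set)))
          \<and> measure M (past_event M X t A) > 0
          \<and> measure M (future_event M X (t + \<tau>) B) > 0}.
        ereal \<bar>measure M (past_event M X t A \<inter> future_event M X (t + \<tau>) B)
               / (measure M (past_event M X t A) * measure M (future_event M X (t + \<tau>) B)) - 1\<bar>)"

definition psi_mixing :: "'a measure \<Rightarrow> (nat \<Rightarrow> 'a \<Rightarrow> 'x) \<Rightarrow> bool" where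
  "psi_mixing M X \<longleftrightarrow> (psi_coeff M X \<longlonglongrightarrow> 0)"

end

theory Submission
  imports Defs
begin

lemma blk_eq_sets:
  assumes meas: "\<And>k. k \<ge> 1 \<Longrightarrow> X k \<in> measurable M (count_space UNIV)"
  shows "{w\<in>space M. block X s T w = x} \<in> sets M"
proof (cases "length x = T")
  case True
  have "{w\<in>space M. block X s T w = x} = {w\<in>space M. \<forall>i\<in>{..<T}. X (s+i+1) w = x!i}"
    using True by (auto simp: block_def list_eq_iff_nth_eq)
  also have "\<dots> \<in> sets M"
  proof (rule sets.sets_Collect_finite_All)
    fix i
    have "X (s+i+1) -` {x!i} \<inter> space M \<in> sets M"
      by (rule measurable_sets[OF meas]) auto
    moreover have "X (s+i+1) -` {x!i} \<inter> space M = {w\<in>space M. X (s+i+1) w = x!i}" by auto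
    ultimately show "{w\<in>space M. X (s+i+1) w = x!i} \<in> sets M" by simp
  qed simp
  finally show ?thesis .
next
  case False
  hence "{w\<in>space M. block X s T w = x} = {}" by (auto simp: block_def)
  thus ?thesis by (simp only:) simp
qed

lemma finL: "finite {xs :: ('x::finite) list. length xs = T}"
  using finite_lists_length_eq[of "UNIV :: 'x set" T] by simp

lemma blk_sets:
  fixes X :: "nat \<Rightarrow> 'a \<Rightarrow> 'x::finite"
  assumes meas: "\<And>k. k \<ge> 1 \<Longrightarrow> X k \<in> measurable M (count_space UNIV)"
  shows "{w\<in>space M. block X s T w \<in> B} \<in> sets M"
proof -
  have "{w\<in>space M. block X s T w \<in> B} = (\<Union>x\<in>B \<inter> {xs. length xs = T}. {w\<in>space M. block X s T w = x})"
    by (auto simp: block_def)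
  also have "\<dots> \<in> sets M"
    using finL[of T] by (intro sets.finite_UN blk_eq_sets meas) auto
  finally show ?thesis .
qed

lemma blk_sum:
  fixes X :: "nat \<Rightarrow> 'a \<Rightarrow> 'x::finite"
  assumes P: "prob_space M" and meas: "\<And>k. k \<ge> 1 \<Longrightarrow> X k \<in> measurable M (count_space UNIV)"
    and S: "S \<in> sets M" and B: "B \<subseteq> {xs. length xs = T}"
  shows "measure M (S \<inter> {w\<in>space M. block X s T w \<in> B})
      = (\<Sum>x\<in>B. measure M (S \<inter> {w\<in>space M. block X s T w = x}))"
proof -
  interpret prob_space M by fact
  have fB: "finite B" using finL[of T] B finite_subset by blast
  have "S \<inter> {w\<in>space M. block X s T w \<in> B} = (\<Union>x\<in>B. S \<inter> {w\<in>space M. block X s T w = x})"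
    by auto
  moreover have "measure M (\<Union>x\<in>B. S \<inter> {w\<in>space M. block X s T w = x})
      = (\<Sum>x\<in>B. measure M (S \<inter> {w\<in>space M. block X s T w = x}))"
    by (rule finite_measure_finite_Union[OF fB])
       (auto simp: disjoint_family_on_def intro!: sets.Int S blk_eq_sets meas)
  ultimately show ?thesis by simp
qed

lemma cyl_sets:
  "{f :: nat \<Rightarrow> 'x. \<forall>i<T. f i = x!i} \<in> sets (PiM UNIV (\<lambda>_. count_space (UNIV :: 'x set)))"
proof -
  let ?N = "PiM UNIV (\<lambda>_. count_space (UNIV :: 'x set))"
  have sp: "space ?N = UNIV" by (simp add: space_PiM)
  have "{f\<in>space ?N. \<forall>i\<in>{..<T}. f i = x!i} \<in> sets ?N"
  proof (rule sets.sets_Collect_finite_All)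
    fix i
    have "(\<lambda>f. f i) -` {x!i} \<inter> space ?N \<in> sets ?N"
      by (rule measurable_sets[OF measurable_component_singleton]) auto
    thus "{f\<in>space ?N. f i = x!i} \<in> sets ?N" by (simp add: sp vimage_def)
  qed simp
  moreover have "{f\<in>space ?N. \<forall>i\<in>{..<T}. f i = x!i} = {f :: nat \<Rightarrow> 'x. \<forall>i<T. f i = x!i}"
    by (auto simp: sp)
  ultimately show ?thesis by simp
qed

lemma mix_decomp:
  fixes q p :: "'b \<Rightarrow> real" and lam :: real
  assumes fin: "finite L" and q0: "\<forall>x\<in>L. 0 \<le> q x" and p0: "\<forall>x\<in>L. 0 \<le> p x"
    and sq: "sum q L = 1" and sp: "sum p L = 1" and l0: "0 \<le> lam" and l1: "lam \<le> 1"
    and ge: "\<forall>x\<in>L. (1 - lam) * p x \<le> q x"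
  shows "\<exists>P' :: 'b pmf. set_pmf P' \<subseteq> L \<and>
     (\<forall>B\<subseteq>L. sum q B = (1 - lam) * sum p B + lam * measure_pmf.prob P' B)"
proof (cases "lam = 0")
  case True
  have "L \<noteq> {}" using sp by (metis sum.empty zero_neq_one)
  then obtain a where a: "a \<in> L" by auto
  have d0: "\<forall>x\<in>L. q x - p x \<ge> 0" using ge True by auto
  have "sum (\<lambda>x. q x - p x) L = 0" using sq sp by (simp add: sum_subtractf)
  hence "\<forall>x\<in>L. q x - p x = 0" using sum_nonneg_eq_0_iff[OF fin, of "\<lambda>x. q x - p x"] d0 by auto
  hence eq: "\<forall>x\<in>L. q x = p x" by auto
  show ?thesis
  proof (intro exI[of _ "return_pmf a"] conjI allI impI)
    show "set_pmf (return_pmf a) \<subseteq> L" using a by simp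
    fix B assume "B \<subseteq> L"
    hence "sum q B = sum p B" using eq by (intro sum.cong) auto
    thus "sum q B = (1 - lam) * sum p B + lam * measure_pmf.prob (return_pmf a) B"
      using True by simp
  qed
next
  case False
  hence lp: "lam > 0" using l0 by auto
  define f where "f x = (if x \<in> L then (q x - (1 - lam) * p x) / lam else 0)" for x
  have f0: "\<And>x. 0 \<le> f x" using ge lp by (auto simp: f_def)
  have sf: "sum f L = 1"
  proof -
    have "sum f L = sum (\<lambda>x. (q x - (1 - lam) * p x) / lam) L" by (simp add: f_def)
    also have "\<dots> = (\<Sum>x\<in>L. q x - (1 - lam) * p x) / lam"
      by (rule sum_divide_distrib[symmetric])
    also have "\<dots> = (sum q L - (1 - lam) * sum p L) / lam"
      by (simp add: sum_subtractf sum_distrib_left)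
    also have "\<dots> = 1" using sq sp lp by simp
    finally show ?thesis .
  qed
  have int: "(\<integral>\<^sup>+ x. ennreal (f x) \<partial>count_space UNIV) = 1"
  proof -
    have "(\<integral>\<^sup>+ x. ennreal (f x) \<partial>count_space UNIV) = (\<Sum>x\<in>L. ennreal (f x))"
      by (rule nn_integral_count_space'[OF fin]) (auto simp: f_def)
    also have "\<dots> = ennreal (sum f L)" using f0 by (simp add: sum_ennreal)
    finally show ?thesis by (simp add: sf)
  qed
  define P' where "P' = embed_pmf f"
  have pm: "pmf P' x = f x" for x unfolding P'_def using pmf_embed_pmf[OF f0 int] .
  show ?thesis
  proof (intro exI[of _ P'] conjI allI impI)
    show "set_pmf P' \<subseteq> L" unfolding P'_def set_embed_pmf[OF f0 int] by (auto simp: f_def)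
    fix B assume B: "B \<subseteq> L"
    hence fB: "finite B" using fin finite_subset by auto
    have "measure_pmf.prob P' B = sum f B" by (simp add: measure_measure_pmf_finite[OF fB] pm)
    also have "\<dots> = sum (\<lambda>x. (q x - (1 - lam) * p x) / lam) B"
      using B by (intro sum.cong) (auto simp: f_def)
    also have "\<dots> = (\<Sum>x\<in>B. q x - (1 - lam) * p x) / lam"
      by (rule sum_divide_distrib[symmetric])
    also have "\<dots> = (sum q B - (1 - lam) * sum p B) / lam"
      by (simp add: sum_subtractf sum_distrib_left)
    finally have "lam * measure_pmf.prob P' B = sum q B - (1 - lam) * sum p B"
      using lp by simp
    thus "sum q B = (1 - lam) * sum p B + lam * measure_pmf.prob P' B" by simp
  qed
qed


lemma real_le_one: "\<not> (1 :: ereal) \<le> e \<Longrightarrow> real_of_ereal e \<le> 1"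
  by (cases e) auto

theorem lemma1:
  fixes M :: "'a measure" and X :: "nat \<Rightarrow> 'a \<Rightarrow> 'x::finite"
  assumes "prob_space M"
    and "\<And>k. k \<ge> 1 \<Longrightarrow> X k \<in> measurable M (count_space UNIV)"
    and "stationary_proc M X"
    and "psi_mixing M X"
  shows "\<exists>lam :: nat \<Rightarrow> real. lam \<longlonglongrightarrow> 0 \<and>
    (\<forall>t \<tau> T (A :: 'x list set). t \<ge> 1 \<and> A \<subseteq> {xs. length xs = t}
        \<and> measure M (past_event M X t A) > 0 \<longrightarrow>
      (\<exists>P' :: 'x list pmf. set_pmf P' \<subseteq> {xs. length xs = T} \<and>
        (\<forall>B \<subseteq> {xs. length xs = T}.
           measure M (past_event M X t A \<inter> {w \<in> space M. block X (t + \<tau>) T w \<in> B})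
             / measure M (past_event M X t A)
           = (1 - lam \<tau>) * PT M X T B + lam \<tau> * measure_pmf.prob P' B)))"
proof -
  interpret P: prob_space M by fact
  note meas = assms(2)
  let ?psi = "psi_coeff M X"
  define lam where "lam \<tau> = (if 1 \<le> ?psi \<tau> then 1 else max 0 (real_of_ereal (?psi \<tau>)))" for \<tau>
  have ps: "?psi \<longlonglongrightarrow> 0" using assms(4) by (simp add: psi_mixing_def)
  have lam_lim: "lam \<longlonglongrightarrow> 0"
  proof -
    have ev: "eventually (\<lambda>\<tau>. ?psi \<tau> < 1) sequentially"
      by (rule order_tendstoD(2)[OF ps]) simp
    have "(\<lambda>\<tau>. max 0 (real_of_ereal (?psi \<tau>))) \<longlonglongrightarrow> max 0 0"
      by (intro tendsto_max tendsto_const lim_real_of_ereal) (use ps in \<open>simp add: zero_ereal_def\<close>)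
    hence "(\<lambda>\<tau>. max 0 (real_of_ereal (?psi \<tau>))) \<longlonglongrightarrow> 0" by simp
    thus ?thesis
      by (rule Lim_transform_eventually) (use ev in \<open>auto elim!: eventually_mono simp: lam_def\<close>)
  qed
  have lam01: "0 \<le> lam \<tau> \<and> lam \<tau> \<le> 1" for \<tau>
    using real_le_one[of "?psi \<tau>"] by (auto simp: lam_def)
  show ?thesis
  proof (intro exI[of _ lam] conjI lam_lim allI impI, elim conjE)
    fix t \<tau> T and A :: "'x list set"
    assume t1: "t \<ge> 1" and AL: "A \<subseteq> {xs. length xs = t}" and pApos: "measure M (past_event M X t A) > 0"
    define PA where "PA = past_event M X t A"
    define pA where "pA = measure M PA"
    define L where "L = {xs :: 'x list. length xs = T}"
    have PAs: "PA \<in> sets M" unfolding PA_def past_event_def by (rule blk_sets[OF meas])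
    have PAsp: "PA \<subseteq> space M" unfolding PA_def past_event_def by auto
    have pA0: "pA > 0" using pApos by (simp add: pA_def PA_def)
    define E where "E x = {w\<in>space M. block X (t + \<tau>) T w = x}" for x
    define q where "q x = measure M (PA \<inter> E x) / pA" for x
    define p where "p x = measure M {w\<in>space M. block X 0 T w = x}" for x
    have finL': "finite L" unfolding L_def by (rule finL)
    have lhs: "measure M (PA \<inter> {w \<in> space M. block X (t + \<tau>) T w \<in> B}) / pA = sum q B"
      if "B \<subseteq> L" for B
      using blk_sum[OF assms(1) meas PAs, where B=B and T=T and s="t + \<tau>"] that
      by (simp add: L_def q_def E_def sum_divide_distrib)
    have pt: "PT M X T B = sum p B" if "B \<subseteq> L" for B
    proof -
      have "PT M X T B = measure M (space M \<inter> {w \<in> space M. block X 0 T w \<in> B})"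
        by (simp add: PT_def Int_absorb1)
      also have "\<dots> = sum p B"
        using blk_sum[OF assms(1) meas sets.top, where B=B and T=T and s=0] that
        by (simp add: L_def p_def Int_absorb1)
      finally show ?thesis .
    qed
    have lenT: "length (block X s T w) = T" for s w by (simp add: block_def)
    have sq: "sum q L = 1"
    proof -
      have "PA \<inter> {w \<in> space M. block X (t + \<tau>) T w \<in> L} = PA"
        using PAsp by (auto simp: L_def lenT)
      thus ?thesis using lhs[of L] pA0 by (simp add: pA_def)
    qed
    have sp: "sum p L = 1"
    proof -
      have "{w \<in> space M. block X 0 T w \<in> L} = space M" by (auto simp: L_def lenT)
      thus ?thesis using pt[of L] P.prob_space by (simp add: PT_def)
    qed
    have q0: "\<forall>x\<in>L. 0 \<le> q x" using pA0 by (simp add: q_def)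
    have p0: "\<forall>x\<in>L. 0 \<le> p x" by (simp add: p_def)
    have ge: "\<forall>x\<in>L. (1 - lam \<tau>) * p x \<le> q x"
    proof
      fix x assume xL: "x \<in> L"
      show "(1 - lam \<tau>) * p x \<le> q x"
      proof (cases "1 \<le> ?psi \<tau> \<or> p x = 0")
        case True
        thus ?thesis using q0 xL by (auto simp: lam_def)
      next
        case False
        hence lt: "\<not> 1 \<le> ?psi \<tau>" and px: "p x > 0" using p0 xL by auto
        define Bx where "Bx = {f :: nat \<Rightarrow> 'x. \<forall>i<T. f i = x!i}"
        have fe: "future_event M X (t + \<tau>) Bx = E x"
          using xL by (auto simp: future_event_def Bx_def E_def block_def list_eq_iff_nth_eq L_def
                              add_ac)
        have stat: "measure M (E x) = p x"
          using assms(3) unfolding stationary_proc_def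
          by (erule_tac x="t + \<tau>" in allE, erule_tac x=T in allE, erule_tac x="{x}" in allE)
             (simp add: E_def p_def)
        define r where "r = measure M (PA \<inter> E x) / (pA * p x)"
        have "ereal \<bar>r - 1\<bar> \<le> ?psi \<tau>"
          unfolding psi_coeff_def
          apply (rule order_trans[OF _ SUP_upper[of "(t, A, Bx)"]])
           apply (simp add: r_def fe stat pA_def PA_def)
          using t1 AL cyl_sets[of T x] pApos px fe stat
          by (simp add: Bx_def PA_def)
        then obtain v where v: "?psi \<tau> = ereal v" "\<bar>r - 1\<bar> \<le> v" using lt
          by (cases "?psi \<tau>") auto
        have lv: "lam \<tau> = v" using lt v by (auto simp: lam_def)
        have "q x = r * p x" using px pA0 by (simp add: q_def r_def)
        moreover have "1 - lam \<tau> \<le> r" using v lv by linarith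
        ultimately show ?thesis using px by (simp add: mult_right_mono)
      qed
    qed
    obtain P' :: "'x list pmf" where P': "set_pmf P' \<subseteq> L"
      "\<forall>B\<subseteq>L. sum q B = (1 - lam \<tau>) * sum p B + lam \<tau> * measure_pmf.prob P' B"
      using mix_decomp[OF finL' q0 p0 sq sp _ _ ge] lam01[of \<tau>] by blast
    show "\<exists>P' :: 'x list pmf. set_pmf P' \<subseteq> {xs. length xs = T} \<and>
        (\<forall>B \<subseteq> {xs. length xs = T}.
           measure M (past_event M X t A \<inter> {w \<in> space M. block X (t + \<tau>) T w \<in> B})
             / measure M (past_event M X t A)
           = (1 - lam \<tau>) * PT M X T B + lam \<tau> * measure_pmf.prob P' B)"
    proof (intro exI[of _ P'] conjI allI impI)
      show "set_pmf P' \<subseteq> {xs. length xs = T}" using P'(1) by (simp add: L_def)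
      fix B :: "'x list set" assume "B \<subseteq> {xs. length xs = T}"
      hence B: "B \<subseteq> L" by (simp add: L_def)
      show "measure M (past_event M X t A \<inter> {w \<in> space M. block X (t + \<tau>) T w \<in> B})
             / measure M (past_event M X t A)
           = (1 - lam \<tau>) * PT M X T B + lam \<tau> * measure_pmf.prob P' B"
        using lhs[OF B] pt[OF B] P'(2) B by (simp add: PA_def pA_def)
    qed
  qed
qed

end
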